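(* Let $T$ be a tree on $n\ge 2$ vertices, let $k\ge 2$, and let $M$ be the order-$k$ Steiner distance hypermatrix of $T$. For any vector $\mathbf{c}\in\mathbb{R}^n$ write $C=\mathbf{c}^T\mathbb{J}=\sum_{i=1}^n c_i$ and, for each edge $e\in E(T)$, $\alpha_e=\mathbf{c}^T\mathbf{a}_e=\sum_{i\in A(e)}c_i$. Then $$M(\mathbf{c},\ldots,\mathbf{c})=\sum_{e\in E(T)}\left(C^k-\alpha_e^k-(C-\alpha_e)^k\right).$$
   Context: $T$ is a tree with vertex set $\{1,\dots,n\}$ and edge set $E(T)$. For $U\subseteq V(T)$, the Steiner distance $S(U)$ is the minimum number of edges of a connected subgraph of $T$ whose vertex set contains $U$. The order-$k$ Steiner distance hypermatrix $M$ of $T$ has entries $M_{(i_1,\dots,i_k)}=S(\{i_1,\dots,i_k\})$ for $(i_1,\dots,i_k)\in V(T)^k$, and for vectors $\mathbf{x}_1,\dots,\mathbf{x}_k\in\mathbb{R}^n$ one writes $M(\mathbf{x}_1,\dots,\mathbf{x}_k)=\sum_{\mathbf{i}\in V(T)^k}M_{\mathbf{i}}\prod_{j=1}^k x_{j i_j}$, where $x_{ji}$ is the $i$-th component of $\mathbf{x}_j$. For an edge $e$, $A(e)$ and $B(e)$ are the vertex sets of the two components of $T-e$ (labeled arbitrarily), and $\mathbf{a}_e\in\mathbb{R}^n$ is the indicator vector of $A(e)$. $\mathbb{J}$ denotes the all-ones vector in $\mathbb{R}^n$. *)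

theory Defs
  imports "HOL-Analysis.Analysis"
begin

definition adj_rel :: "nat set set \<Rightarrow> (nat \<times> nat) set" where
  "adj_rel F = {(a, b). {a, b} \<in> F}"

definition is_connected :: "nat set \<Rightarrow> nat set set \<Rightarrow> bool" where
  "is_connected W F \<longleftrightarrow> (\<forall>x\<in>W. \<forall>y\<in>W. (x, y) \<in> (adj_rel F)\<^sup>*)"

definition is_graph :: "nat set \<Rightarrow> nat set set \<Rightarrow> bool" where
  "is_graph V E \<longleftrightarrow> (\<forall>e\<in>E. e \<subseteq> V \<and> card e = 2)"

definition is_tree :: "nat set \<Rightarrow> nat set set \<Rightarrow> bool" where
  "is_tree V E \<longleftrightarrow> finite V \<and> is_graph V E \<and> is_connected V E \<and> card E = card V - 1"

definition steiner :: "nat set \<Rightarrow> nat set set \<Rightarrow> nat set \<Rightarrow> nat" where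
  "steiner V E U = (LEAST m. \<exists>W F. W \<subseteq> V \<and> F \<subseteq> E \<and> (\<forall>e\<in>F. e \<subseteq> W) \<and> U \<subseteq> W
       \<and> is_connected W F \<and> card F = m)"

definition component :: "nat set \<Rightarrow> nat set set \<Rightarrow> nat \<Rightarrow> nat set" where
  "component V F u = {v \<in> V. (u, v) \<in> (adj_rel F)\<^sup>*}"

text \<open>M(c,...,c) for the order-k Steiner distance hypermatrix of (V,E), with V = {1..n};
  index tuples (i_1,...,i_k) are functions f : {0..<k} -> {1..n}.\<close>
definition steiner_form :: "nat \<Rightarrow> nat set set \<Rightarrow> nat \<Rightarrow> (nat \<Rightarrow> real) \<Rightarrow> real" where
  "steiner_form n E k c =
     (\<Sum>f \<in> PiE {..<k} (\<lambda>_. {1..n}).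
        real (steiner {1..n} E (f ` {..<k})) * (\<Prod>j<k. c (f j)))"

end

theory Submission
  imports Defs
begin

lemma adj_sym: "sym (adj_rel F)"
  by (auto simp: sym_def adj_rel_def insert_commute)

lemma rtr_sym: "(x,y) \<in> (adj_rel F)\<^sup>* \<Longrightarrow> (y,x) \<in> (adj_rel F)\<^sup>*"
  using sym_rtrancl[OF adj_sym] unfolding sym_def by blast

lemma adj_mono: "F \<subseteq> G \<Longrightarrow> (adj_rel F)\<^sup>* \<subseteq> (adj_rel G)\<^sup>*"
  by (rule rtrancl_mono) (auto simp: adj_rel_def)

lemma comp_eq: assumes h: "(u,w) \<in> (adj_rel F)\<^sup>*" shows "component V F u = component V F w"
proof -
  have "(u,v) \<in> (adj_rel F)\<^sup>* \<longleftrightarrow> (w,v) \<in> (adj_rel F)\<^sup>*" for v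
    using h rtr_sym[OF h] rtrancl_trans by metis
  thus ?thesis unfolding component_def by blast
qed

definition comps :: "nat set \<Rightarrow> nat set set \<Rightarrow> nat set set" where
  "comps V F = (\<lambda>u. component V F u) ` V"

lemma count_step:
  assumes "a \<in> V" "b \<in> V" "finite V"
  shows "card (comps V F) \<le> card (comps V (insert {a,b} F)) + 1"
proof -
  let ?F' = "insert {a,b} F"
  define cF where "cF = component V F"
  define cF' where "cF' = component V ?F'"
  define G where "G = (\<lambda>C. cF' (SOME x. x \<in> C))"
  let ?R = "(adj_rel F)\<^sup>*"
  have sub: "?R \<subseteq> (adj_rel ?F')\<^sup>*" by (rule adj_mono) auto
  have Gc: "G (cF u) = cF' u" if "u \<in> V" for u
  proof -
    have "u \<in> cF u" using that by (simp add: cF_def component_def)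
    hence "(SOME x. x \<in> cF u) \<in> cF u" by (rule someI)
    hence "(u, SOME x. x \<in> cF u) \<in> (adj_rel ?F')\<^sup>*" using sub by (auto simp: cF_def component_def)
    thus ?thesis unfolding G_def cF'_def using comp_eq by metis
  qed
  have path: "(x,z) \<in> ?R \<or> ((x,a) \<in> ?R \<and> (b,z) \<in> ?R) \<or> ((x,b) \<in> ?R \<and> (a,z) \<in> ?R)"
    if "(x,z) \<in> (adj_rel ?F')\<^sup>*" for x z
    using that
  proof (induction rule: rtrancl_induct)
    case base
    then show ?case by simp
  next
    case (step y z)
    hence yz: "{y,z} = {a,b} \<or> (y,z) \<in> adj_rel F" by (auto simp: adj_rel_def)
    show ?case
    proof (cases "(y,z) \<in> adj_rel F")
      case True
      then show ?thesis using step.IH by (meson rtrancl.rtrancl_into_rtrancl)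
    next
      case False
      hence "(y = a \<and> z = b) \<or> (y = b \<and> z = a)" using yz by (auto simp: doubleton_eq_iff)
      moreover have "(y,y) \<in> ?R" "(z,z) \<in> ?R" by auto
      ultimately show ?thesis using step.IH rtr_sym rtrancl_trans by metis
    qed
  qed
  have inj: "inj_on G (comps V F - {cF b})"
  proof (rule inj_onI)
    fix C1 C2 assume C1: "C1 \<in> comps V F - {cF b}" and C2: "C2 \<in> comps V F - {cF b}" and eq: "G C1 = G C2"
    obtain x1 where x1: "x1 \<in> V" "C1 = cF x1" using C1 unfolding comps_def cF_def by blast
    obtain x2 where x2: "x2 \<in> V" "C2 = cF x2" using C2 unfolding comps_def cF_def by blast
    have "cF' x1 = cF' x2" using eq x1 x2 Gc by simp
    moreover have "x2 \<in> cF' x2" using x2 by (simp add: cF'_def component_def)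
    ultimately have "x2 \<in> cF' x1" by simp
    hence "(x1,x2) \<in> (adj_rel ?F')\<^sup>*" by (simp add: cF'_def component_def)
    hence P: "(x1,x2) \<in> ?R \<or> ((x1,a) \<in> ?R \<and> (b,x2) \<in> ?R) \<or> ((x1,b) \<in> ?R \<and> (a,x2) \<in> ?R)"
      by (rule path)
    have n1: "(b,x1) \<notin> ?R" using C1 x1 comp_eq unfolding cF_def by blast
    have n2: "(b,x2) \<notin> ?R" using C2 x2 comp_eq unfolding cF_def by blast
    have "(x1,x2) \<in> ?R" using P n1 n2 rtr_sym by blast
    thus "C1 = C2" using x1 x2 comp_eq unfolding cF_def by blast
  qed
  have img: "G ` (comps V F - {cF b}) \<subseteq> comps V ?F'"
  proof
    fix D assume "D \<in> G ` (comps V F - {cF b})"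
    then obtain u where "u \<in> V" "D = G (cF u)" unfolding comps_def cF_def by blast
    thus "D \<in> comps V ?F'" using Gc unfolding comps_def cF'_def by blast
  qed
  have fin: "finite (comps V ?F')" using assms unfolding comps_def by simp
  have "card (comps V F - {cF b}) = card (G ` (comps V F - {cF b}))" using inj by (simp add: card_image)
  also have "\<dots> \<le> card (comps V ?F')" using fin img by (rule card_mono)
  finally have "card (comps V F - {cF b}) \<le> card (comps V ?F')" .
  moreover have "cF b \<in> comps V F" "finite (comps V F)" using assms unfolding comps_def cF_def by auto
  ultimately show ?thesis by (simp add: card_Diff_singleton)
qed

lemma count:
  assumes "finite F" "\<forall>f\<in>F. f \<subseteq> V \<and> card f = 2" "finite V"
  shows "card V \<le> card F + card (comps V F)"
  using assms
proof (induction F rule: finite_induct)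
  case empty
  have "adj_rel {} = {}" by (simp add: adj_rel_def)
  hence "comps V {} = (\<lambda>u. {u}) ` V" by (auto simp: comps_def component_def)
  moreover have "card ((\<lambda>u. {u}) ` V) = card V" by (rule card_image) (auto simp: inj_on_def)
  ultimately show ?case by simp
next
  case (insert e F)
  have e2: "e \<subseteq> V" "card e = 2" using insert.prems(1) by auto
  then obtain a b where "e = {a,b}" unfolding card_2_iff by blast
  with e2 have ab: "e = {a,b}" "a \<in> V" "b \<in> V" by auto
  have "card V \<le> card F + card (comps V F)" using insert by auto
  also have "\<dots> \<le> card F + card (comps V (insert e F)) + 1"
    using count_step[OF ab(2,3) insert.prems(2), of F] ab by simp
  finally show ?case using insert by simp
qed

lemma conn_count:
  assumes "finite F" "\<forall>f\<in>F. f \<subseteq> V \<and> card f = 2" "finite V" "is_connected V F" "V \<noteq> {}"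
  shows "card V \<le> card F + 1"
proof -
  have cu: "component V F u = V" if "u \<in> V" for u
    using assms(4) that unfolding component_def is_connected_def by blast
  have "comps V F = {V}"
    unfolding comps_def using cu assms(5) by blast
  thus ?thesis using count[OF assms(1-3)] by simp
qed


lemma tree_finE: "is_tree V E \<Longrightarrow> finite E"
proof -
  assume T: "is_tree V E"
  hence "E \<subseteq> Pow V" "finite V" unfolding is_tree_def is_graph_def by auto
  thus "finite E" using finite_subset by blast
qed

lemma cut:
  assumes T: "is_tree V E" and n2: "card V \<ge> 2" and e: "e \<in> E" "e = {u,v}"
  shows "(u,v) \<notin> (adj_rel (E-{e}))\<^sup>*"
proof
  assume uv: "(u,v) \<in> (adj_rel (E-{e}))\<^sup>*"
  have "adj_rel E \<subseteq> (adj_rel (E-{e}))\<^sup>*"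
  proof
    fix p assume "p \<in> adj_rel E"
    then obtain x y where p: "p = (x,y)" "{x,y} \<in> E" by (auto simp: adj_rel_def)
    show "p \<in> (adj_rel (E-{e}))\<^sup>*"
    proof (cases "{x,y} = e")
      case True
      then show ?thesis using uv rtr_sym[OF uv] p e by (auto simp: doubleton_eq_iff)
    next
      case False
      then show ?thesis using p by (auto simp: adj_rel_def)
    qed
  qed
  hence "(adj_rel E)\<^sup>* \<subseteq> (adj_rel (E-{e}))\<^sup>*" by (metis rtrancl_subset_rtrancl)
  moreover have g: "\<forall>f\<in>E. f \<subseteq> V \<and> card f = 2" "finite V" "card E = card V - 1"
    "is_connected V E" using T by (simp_all add: is_tree_def is_graph_def)
  ultimately have conn: "is_connected V (E-{e})" unfolding is_connected_def by blast
  have finE: "finite E" by (rule tree_finE[OF T])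
  have "V \<noteq> {}" using n2 by auto
  hence "card V \<le> card (E-{e}) + 1"
    using conn_count[of "E-{e}" V] g finE conn by blast
  moreover have "card (E-{e}) = card V - 2" using g(3) e finE by simp
  ultimately show False using n2 by linarith
qed

lemma steiner_eq:
  assumes T: "is_tree V E" and n2: "card V \<ge> 2"
    and hA: "\<forall>e\<in>E. \<exists>u\<in>e. A e = component V (E - {e}) u"
    and U: "U \<subseteq> V"
  shows "steiner V E U = card {e\<in>E. U \<inter> A e \<noteq> {} \<and> U - A e \<noteq> {}}"
proof -
  let ?P = "{e\<in>E. U \<inter> A e \<noteq> {} \<and> U - A e \<noteq> {}}"
  let ?Q = "\<lambda>m. \<exists>W F. W \<subseteq> V \<and> F \<subseteq> E \<and> (\<forall>e\<in>F. e \<subseteq> W) \<and> U \<subseteq> W \<and> is_connected W F \<and> card F = m"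
  have finE: "finite E" by (rule tree_finE[OF T])
  have AV: "A e \<subseteq> V" if "e \<in> E" for e
  proof -
    from bspec[OF hA that] obtain u where "u \<in> e" and u: "A e = component V (E - {e}) u" ..
    show ?thesis unfolding u component_def by blast
  qed
  have Aclos: "y \<in> A e \<longleftrightarrow> x \<in> A e" if "e \<in> E" "{x,y} \<in> E - {e}" for e x y
  proof -
    from bspec[OF hA that(1)] obtain u where "u \<in> e" and u: "A e = component V (E - {e}) u" ..
    have xy: "x \<in> V" "y \<in> V" using T that by (auto simp: is_tree_def is_graph_def)
    have adj: "(x,y) \<in> adj_rel (E-{e})" "(y,x) \<in> adj_rel (E-{e})" using that by (auto simp: adj_rel_def insert_commute)
    let ?R = "(adj_rel (E-{e}))\<^sup>*"
    have "(u,x) \<in> ?R \<Longrightarrow> (u,y) \<in> ?R" "(u,y) \<in> ?R \<Longrightarrow> (u,x) \<in> ?R"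
      using adj by (meson rtrancl.rtrancl_into_rtrancl)+
    thus ?thesis unfolding u component_def using xy by blast
  qed
  have ex: "?Q (card E)"
  proof (rule exI[of _ V], rule exI[of _ E], intro conjI)
    show "\<forall>e\<in>E. e \<subseteq> V" using T unfolding is_tree_def is_graph_def by blast
    show "is_connected V E" using T unfolding is_tree_def by blast
  qed (use U in auto)
  have lower: "?P \<subseteq> F" if "W \<subseteq> V" "F \<subseteq> E" "U \<subseteq> W" "is_connected W F" for W F
  proof
    fix e assume eP: "e \<in> ?P"
    show "e \<in> F"
    proof (rule ccontr)
      assume "e \<notin> F"
      hence FE: "F \<subseteq> E - {e}" using that by auto
      obtain x y where x: "x \<in> U" "x \<in> A e" and y: "y \<in> U" "y \<notin> A e" using eP by auto
      have "(x,y) \<in> (adj_rel F)\<^sup>*" using that x y unfolding is_connected_def by blast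
      hence xy: "(x,y) \<in> (adj_rel (E-{e}))\<^sup>*" using adj_mono[OF FE] by blast
      have eE: "e \<in> E" using eP by simp
      from bspec[OF hA eE] obtain u where "u \<in> e" and u: "A e = component V (E - {e}) u" ..
      have "(u,x) \<in> (adj_rel (E-{e}))\<^sup>*" using x u by (auto simp: component_def)
      hence "(u,y) \<in> (adj_rel (E-{e}))\<^sup>*" using xy by (rule rtrancl_trans)
      thus False using y u U by (auto simp: component_def)
    qed
  qed
  define m where "m = steiner V E U"
  have Qm: "?Q m" unfolding m_def steiner_def by (rule LeastI[of ?Q], rule ex)
  then obtain W F where WF: "W \<subseteq> V" "F \<subseteq> E" "\<forall>e\<in>F. e \<subseteq> W" "U \<subseteq> W" "is_connected W F" "card F = m"
    by blast
  have finF: "finite F" using WF(2) finE by (rule finite_subset)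
  have PF: "?P \<subseteq> F" by (rule lower[OF WF(1,2,4,5)])
  have FP: "F \<subseteq> ?P"
  proof
    fix e assume eF: "e \<in> F"
    show "e \<in> ?P"
    proof (rule ccontr)
      assume neP: "e \<notin> ?P"
      have eE: "e \<in> E" using eF WF by auto
      from bspec[OF hA eE] obtain u where u: "u \<in> e" "A e = component V (E - {e}) u" ..
      have "card e = 2" using T eE unfolding is_tree_def is_graph_def by blast
      then obtain a b where ab: "e = {a,b}" "a \<noteq> b" unfolding card_2_iff by blast
      have "\<exists>v. e = {u,v} \<and> u \<noteq> v"
      proof (cases "u = a")
        case True thus ?thesis using ab by blast
      next
        case False hence "u = b" using ab u(1) by blast
        thus ?thesis using ab by (intro exI[of _ a]) (auto simp: insert_commute)
      qed
      then obtain v where ev: "e = {u,v}" "u \<noteq> v" by blast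
      have uV: "u \<in> V" "v \<in> V" using T eE ev unfolding is_tree_def is_graph_def by auto
      have uA: "u \<in> A e" using u uV by (simp add: component_def)
      have vA: "v \<notin> A e" using cut[OF T n2 eE ev(1)] u by (simp add: component_def)
      obtain S s t where S: "U \<subseteq> S" "s \<in> S" "t \<notin> S" "e = {s,t}" "S \<subseteq> V"
        and Scl: "\<And>x y. {x,y} \<in> E - {e} \<Longrightarrow> y \<in> S \<longleftrightarrow> x \<in> S"
      proof (cases "U \<subseteq> A e")
        case True
        show ?thesis
          by (rule that[of "A e" u v]) (fact True uA vA ev(1) AV[OF eE] Aclos[OF eE])+
      next
        case False
        hence "U \<subseteq> V - A e" using neP eE U by auto
        moreover have "v \<in> V - A e" "u \<notin> V - A e" "e = {v,u}" "V - A e \<subseteq> V"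
          using uA vA ev uV by (auto simp: insert_commute)
        moreover have Vcl: "y \<in> V - A e \<longleftrightarrow> x \<in> V - A e" if "{x,y} \<in> E - {e}" for x y
        proof -
          have "x \<in> V" "y \<in> V" using that T unfolding is_tree_def is_graph_def by blast+
          thus ?thesis using Aclos[OF eE that] by blast
        qed
        ultimately show ?thesis
          by (rule that[of "V - A e" v u])
      qed
      define F' where "F' = {f\<in>F. f \<subseteq> S}"
      define W' where "W' = W \<inter> S"
      have conn': "(x,z) \<in> (adj_rel F')\<^sup>*"
        if xz: "(x,z) \<in> (adj_rel F)\<^sup>*" and xS: "x \<in> S" and zS: "z \<in> S" for x z
      proof -
        have "(z \<in> S \<longrightarrow> (x,z) \<in> (adj_rel F')\<^sup>*) \<and> (z \<notin> S \<longrightarrow> (x,s) \<in> (adj_rel F')\<^sup>*)"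
          using xz
        proof (induction rule: rtrancl_induct)
          case base
          then show ?case using xS by simp
        next
          case (step y z)
          then have yzF: "{y,z} \<in> F" by (simp add: adj_rel_def)
          show ?case
          proof (cases "{y,z} = e")
            case True
            then have "(y = s \<and> z = t) \<or> (y = t \<and> z = s)" using S by (auto simp: doubleton_eq_iff)
            then show ?thesis using step.IH S(2,3) by blast
          next
            case False
            hence yzE: "{y,z} \<in> E - {e}" using yzF WF by auto
            show ?thesis
            proof (cases "y \<in> S")
              case True
              hence "z \<in> S" using Scl[OF yzE] by simp
              hence "{y,z} \<in> F'" using True yzF by (simp add: F'_def)
              hence "(y,z) \<in> adj_rel F'" by (simp add: adj_rel_def)
              then show ?thesis using step.IH True \<open>z \<in> S\<close> by (meson rtrancl.rtrancl_into_rtrancl)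
            next
              case False
              hence "z \<notin> S" using Scl[OF yzE] by simp
              then show ?thesis using step.IH False by simp
            qed
          qed
        qed
        thus ?thesis using zS by simp
      qed
      have "?Q (card F')"
      proof (intro exI conjI)
        show "W' \<subseteq> V" using WF by (auto simp: W'_def)
        show "F' \<subseteq> E" using WF by (auto simp: F'_def)
        show "\<forall>e\<in>F'. e \<subseteq> W'" using WF by (auto simp: F'_def W'_def)
        show "U \<subseteq> W'" using WF S by (auto simp: W'_def)
        show "is_connected W' F'" unfolding is_connected_def
        proof (intro ballI)
          fix x y assume "x \<in> W'" "y \<in> W'"
          hence xyW: "x \<in> W" "y \<in> W" "x \<in> S" "y \<in> S" by (auto simp: W'_def)
          hence "(x,y) \<in> (adj_rel F)\<^sup>*" using WF(5) unfolding is_connected_def by blast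
          thus "(x,y) \<in> (adj_rel F')\<^sup>*" using xyW(3,4) by (rule conn')
        qed
      qed simp
      hence m1: "m \<le> card F'" unfolding m_def steiner_def by (rule Least_le)
      have "F' \<subseteq> F - {e}" using S by (auto simp: F'_def)
      hence m2: "card F' \<le> card (F - {e})" using finF by (intro card_mono) auto
      have m3: "card (F - {e}) < card F" using finF eF by (rule card_Diff1_less)
      show False using m1 m2 m3 WF(6) by linarith
    qed
  qed
  have "F = ?P" using PF FP by blast
  thus ?thesis using WF m_def by simp
qed


lemma sum_PiE_pow:
  fixes c :: "nat \<Rightarrow> real"
  assumes "finite S"
  shows "(\<Sum>f\<in>PiE {..<k} (\<lambda>_. S). \<Prod>j<k. c (f j)) = (\<Sum>i\<in>S. c i) ^ k"
proof -
  have "(\<Sum>f\<in>PiE {..<k} (\<lambda>_. S). \<Prod>j<k. c (f j)) = (\<Prod>j<k. \<Sum>i\<in>S. c i)"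
    using assms by (subst prod_sum_PiE) auto
  also have "\<dots> = (\<Sum>i\<in>S. c i) ^ k" by simp
  finally show ?thesis .
qed

lemma sum_sub_PiE:
  fixes c :: "nat \<Rightarrow> real"
  assumes "finite V" "S \<subseteq> V"
  shows "(\<Sum>f\<in>PiE {..<k} (\<lambda>_. V). if f ` {..<k} \<subseteq> S then \<Prod>j<k. c (f j) else 0) = (\<Sum>i\<in>S. c i) ^ k"
proof -
  have "{f \<in> PiE {..<k} (\<lambda>_. V). f ` {..<k} \<subseteq> S} = PiE {..<k} (\<lambda>_. S)"
    using assms(2) by (auto simp: PiE_iff image_subset_iff extensional_def)
  hence "(\<Sum>f\<in>PiE {..<k} (\<lambda>_. V). if f ` {..<k} \<subseteq> S then \<Prod>j<k. c (f j) else 0)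
      = (\<Sum>f\<in>PiE {..<k} (\<lambda>_. S). \<Prod>j<k. c (f j))"
    by (simp add: sum.inter_filter[symmetric] assms(1) finite_PiE)
  also have "\<dots> = (\<Sum>i\<in>S. c i) ^ k" using assms finite_subset by (intro sum_PiE_pow) auto
  finally show ?thesis .
qed

theorem theorem1:
  fixes n k :: nat and E :: "nat set set" and c :: "nat \<Rightarrow> real"
    and A :: "nat set \<Rightarrow> nat set"
  assumes "n \<ge> 2" and "k \<ge> 2"
    and "is_tree {1..n} E"
    and "\<forall>e\<in>E. \<exists>u\<in>e. A e = component {1..n} (E - {e}) u"
  shows "steiner_form n E k c =
    (\<Sum>e\<in>E. (\<Sum>i=1..n. c i) ^ k - (\<Sum>i\<in>A e. c i) ^ k
             - ((\<Sum>i=1..n. c i) - (\<Sum>i\<in>A e. c i)) ^ k)"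
proof -
  define V where "V = {1..n}"
  define K where "K = {..<k}"
  define PI where "PI = PiE K (\<lambda>_. V)"
  define p where "p = (\<lambda>f. \<Prod>j<k. c (f j))"
  define sp where "sp = (\<lambda>f e. f ` K \<inter> A e \<noteq> {} \<and> f ` K - A e \<noteq> {})"
  have T: "is_tree V E" using assms(3) by (simp add: V_def)
  have n2: "card V \<ge> 2" using assms(1) by (simp add: V_def)
  have hA: "\<forall>e\<in>E. \<exists>u\<in>e. A e = component V (E - {e}) u" using assms(4) by (simp add: V_def)
  have finE: "finite E" by (rule tree_finE[OF T])
  have finV: "finite V" by (simp add: V_def)
  have finPI: "finite PI" unfolding PI_def using finV by (simp add: finite_PiE K_def)
  have AV: "A e \<subseteq> V" if "e \<in> E" for e
  proof -
    from bspec[OF hA that] obtain u where u: "A e = component V (E - {e}) u" ..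
    show ?thesis unfolding u component_def by blast
  qed
  have Kne: "K \<noteq> {}" using assms(2) by (simp add: K_def lessThan_empty_iff)
  have st: "real (steiner V E (f ` K)) = (\<Sum>e\<in>E. if sp f e then 1 else 0)" if "f \<in> PI" for f
  proof -
    have "f ` K \<subseteq> V" using that by (auto simp: PI_def PiE_iff)
    hence "steiner V E (f ` K) = card {e\<in>E. sp f e}"
      unfolding sp_def by (rule steiner_eq[OF T n2 hA])
    thus ?thesis using finE by (simp add: sum.If_cases Int_def)
  qed
  have "steiner_form n E k c = (\<Sum>f\<in>PI. real (steiner V E (f ` K)) * p f)"
    by (simp add: steiner_form_def V_def K_def PI_def p_def)
  also have "\<dots> = (\<Sum>f\<in>PI. \<Sum>e\<in>E. if sp f e then p f else 0)"
    by (rule sum.cong) (auto simp: st sum_distrib_right intro!: sum.cong)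
  also have "\<dots> = (\<Sum>e\<in>E. \<Sum>f\<in>PI. if sp f e then p f else 0)"
    by (rule sum.swap)
  also have "\<dots> = (\<Sum>e\<in>E. (\<Sum>i=1..n. c i) ^ k - (\<Sum>i\<in>A e. c i) ^ k
             - ((\<Sum>i=1..n. c i) - (\<Sum>i\<in>A e. c i)) ^ k)"
  proof (rule sum.cong[OF refl])
    fix e assume eE: "e \<in> E"
    have pw: "(if sp f e then p f else 0) = p f - (if f ` K \<subseteq> A e then p f else 0)
        - (if f ` K \<subseteq> V - A e then p f else 0)" if "f \<in> PI" for f
    proof -
      have "f ` K \<subseteq> V" using that by (auto simp: PI_def PiE_iff)
      moreover have "f ` K \<noteq> {}" using Kne by simp
      ultimately show ?thesis unfolding sp_def by auto
    qed
    have "(\<Sum>f\<in>PI. if sp f e then p f else 0) = (\<Sum>f\<in>PI. p f) - (\<Sum>f\<in>PI. if f ` K \<subseteq> A e then p f else 0)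
        - (\<Sum>f\<in>PI. if f ` K \<subseteq> V - A e then p f else 0)"
      by (simp add: sum.cong[OF refl pw] sum_subtractf)
    also have "(\<Sum>f\<in>PI. p f) = (\<Sum>i\<in>V. c i) ^ k"
      unfolding PI_def p_def K_def using finV by (rule sum_PiE_pow)
    also have "(\<Sum>f\<in>PI. if f ` K \<subseteq> A e then p f else 0) = (\<Sum>i\<in>A e. c i) ^ k"
      unfolding PI_def p_def K_def using finV AV[OF eE] by (rule sum_sub_PiE)
    also have "(\<Sum>f\<in>PI. if f ` K \<subseteq> V - A e then p f else 0) = (\<Sum>i\<in>V - A e. c i) ^ k"
      unfolding PI_def p_def K_def using finV by (rule sum_sub_PiE) auto
    also have "(\<Sum>i\<in>V - A e. c i) = (\<Sum>i\<in>V. c i) - (\<Sum>i\<in>A e. c i)"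
      using finV AV[OF eE] by (simp add: sum_diff)
    finally show "(\<Sum>f\<in>PI. if sp f e then p f else 0) = (\<Sum>i=1..n. c i) ^ k - (\<Sum>i\<in>A e. c i) ^ k
             - ((\<Sum>i=1..n. c i) - (\<Sum>i\<in>A e. c i)) ^ k" by (simp add: V_def)
  qed
  finally show ?thesis .
qed


end
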